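(* Let $(F_n)$ be the Fibonacci numbers ($F_0=0$, $F_1=1$, $F_{n+2}=F_{n+1}+F_n$), $(E_n)$ the sequence with $E_0=0$, $E_1=E_2=1$, $E_{n+3}=E_n+E_{n+2}$, and $(D_n)$ the sequence with $D_0=1$, $D_1=D_2=0$, $D_{n+3}=D_n+D_{n+1}$ (all indexed by $\mathbb Z$). Then for every fixed integer $k\ge 0$, $$\lim_{n\to+\infty}(E_{n-k}-D_n)=\lim_{n\to+\infty}(F_{n-k}-E_n)=+\infty.$$ *)

theory Defs
  imports Complex_Main "HOL-Number_Theory.Fib"
begin

fun seqE :: "nat \<Rightarrow> int" where
  "seqE 0 = 0"
| "seqE (Suc 0) = 1"
| "seqE (Suc (Suc 0)) = 1"
| "seqE (Suc (Suc (Suc n))) = seqE n + seqE (Suc (Suc n))"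

fun seqD :: "nat \<Rightarrow> int" where
  "seqD 0 = 1"
| "seqD (Suc 0) = 0"
| "seqD (Suc (Suc 0)) = 0"
| "seqD (Suc (Suc (Suc n))) = seqD n + seqD (Suc n)"

end

theory Submission
  imports Defs "HOL-Real_Asymp.Real_Asymp"
begin

lemma D_bound: "0 \<le> seqD n \<and> real_of_int (seqD n) \<le> (4/3::real)^n"
proof (induction n rule: seqD.induct)
  case (4 n)
  have "(4/3::real)^n * (1 + 4/3) \<le> (4/3)^n * (4/3)^3"
    by (intro mult_left_mono) (auto simp: eval_nat_numeral)
  then show ?case using 4 by (auto simp: algebra_simps)
qed auto

lemma E_lower: "real_of_int (seqE (Suc n)) \<ge> (1/2) * (7/5::real)^n"
proof (induction n rule: nat_less_induct)
  case (1 n)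
  show ?case
  proof (cases "n \<ge> 3")
    case True
    define m where "m = n - 3"
    have m: "n = Suc (Suc (Suc m))" using True by (simp add: m_def)
    define x where "x = (7/5::real)^m"
    have x: "x \<ge> 0" unfolding x_def by simp
    have a: "real_of_int (seqE (Suc m)) \<ge> (1/2) * x" using 1 m x_def by auto
    have b: "real_of_int (seqE (Suc (Suc (Suc m)))) \<ge> (1/2) * (x * (49/25))"
    proof -
      have "Suc (Suc m) < n" using m by simp
      then have "real_of_int (seqE (Suc (Suc (Suc m)))) \<ge> (1/2) * (7/5::real)^(Suc (Suc m))"
        using 1 by blast
      moreover have "(7/5::real)^(Suc (Suc m)) = x * (49/25)" unfolding x_def by simp
      ultimately show ?thesis by simp
    qed
    have p3: "(7/5::real)^n = x * (343/125)" unfolding x_def m by simp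
    have eq: "seqE (Suc n) = seqE (Suc m) + seqE (Suc (Suc (Suc m)))" unfolding m by simp
    show ?thesis unfolding p3 eq of_int_add using a b x by linarith
  next
    case False
    then have "n = 0 \<or> n = 1 \<or> n = 2" by auto
    then show ?thesis by (auto simp: numeral_eq_Suc)
  qed
qed

lemma E_upper: "real_of_int (seqE n) \<le> (3/2::real)^n"
proof (induction n rule: seqE.induct)
  case (4 n)
  define x where "x = (3/2::real)^n"
  have x: "x \<ge> 0" unfolding x_def by simp
  have p2: "(3/2::real)^(Suc (Suc n)) = x * (9/4)" unfolding x_def by simp
  have p3: "(3/2::real)^(Suc (Suc (Suc n))) = x * (27/8)" unfolding x_def by simp
  have eq: "seqE (Suc (Suc (Suc n))) = seqE n + seqE (Suc (Suc n))" by simp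
  show ?case using 4 x unfolding eq p3 of_int_add using p2 x_def by linarith
qed auto

lemma fib_lower: "real (fib (Suc n)) \<ge> (1/2) * (8/5::real)^n"
proof (induction n rule: nat_less_induct)
  case (1 n)
  show ?case
  proof (cases "n \<ge> 2")
    case True
    define m where "m = n - 2"
    have m: "n = Suc (Suc m)" using True by (simp add: m_def)
    have a: "real (fib (Suc m)) \<ge> (1/2) * (8/5::real)^m" using 1 m by auto
    have b: "real (fib (Suc (Suc m))) \<ge> (1/2) * (8/5::real)^(Suc m)" using 1 m by auto
    have "(8/5::real)^m * (8/5)^2 \<le> (8/5)^m * (1 + 8/5)"
      by (intro mult_left_mono) (auto simp: eval_nat_numeral)
    then show ?thesis using a b m by (auto simp: algebra_simps)
  next
    case False
    then have "n = 0 \<or> n = 1" by auto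
    then show ?thesis by (auto simp: numeral_eq_Suc)
  qed
qed

lemma int_lim:
  fixes f :: "nat \<Rightarrow> int" and g :: "nat \<Rightarrow> real"
  assumes "filterlim g at_top sequentially"
    and "eventually (\<lambda>n. g n \<le> real_of_int (f n)) sequentially"
  shows "filterlim f at_top sequentially"
proof -
  have "filterlim (\<lambda>n. real_of_int (f n)) at_top sequentially"
    using filterlim_at_top_mono[OF assms(1) assms(2)] .
  then show ?thesis
    unfolding filterlim_at_top
    by (metis (mono_tags, lifting) eventually_mono of_int_le_iff)
qed

theorem theorem13:
  fixes k :: nat
  shows "filterlim (\<lambda>n. seqE (n - k) - seqD n) at_top sequentially
       \<and> filterlim (\<lambda>n. int (fib (n - k)) - seqE n) at_top sequentially"
proof
  define C where "C = (1/2) / (7/5::real)^(Suc k)"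
  have C: "C > 0" unfolding C_def by simp
  have l1: "filterlim (\<lambda>n::nat. C*(7/5::real)^n - (4/3)^n) at_top sequentially"
    using C by real_asymp
  show "filterlim (\<lambda>n. seqE (n - k) - seqD n) at_top sequentially"
  proof (rule int_lim[OF l1])
    show "eventually (\<lambda>n. C*(7/5::real)^n - (4/3)^n \<le> real_of_int (seqE (n - k) - seqD n)) sequentially"
      unfolding eventually_sequentially
    proof (intro exI allI impI)
      fix n assume n: "Suc k \<le> n"
      then have nn: "n - k = Suc (n - Suc k)" by auto
      have p: "(7/5::real)^n = (7/5)^(n - Suc k) * (7/5)^(Suc k)"
        using n by (metis le_add_diff_inverse2 power_add)
      have "C*(7/5::real)^n = (1/2) * (7/5)^(n - Suc k)"
        unfolding C_def p by simp
      also have "\<dots> \<le> real_of_int (seqE (n - k))" using E_lower nn by metis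
      finally show "C*(7/5::real)^n - (4/3)^n \<le> real_of_int (seqE (n - k) - seqD n)"
        using D_bound[of n] by simp
    qed
  qed
next
  define C where "C = (1/2) / (8/5::real)^(Suc k)"
  have C: "C > 0" unfolding C_def by simp
  have l1: "filterlim (\<lambda>n::nat. C*(8/5::real)^n - (3/2)^n) at_top sequentially"
    using C by real_asymp
  show "filterlim (\<lambda>n. int (fib (n - k)) - seqE n) at_top sequentially"
  proof (rule int_lim[OF l1])
    show "eventually (\<lambda>n. C*(8/5::real)^n - (3/2)^n \<le> real_of_int (int (fib (n - k)) - seqE n)) sequentially"
      unfolding eventually_sequentially
    proof (intro exI allI impI)
      fix n assume n: "Suc k \<le> n"
      then have nn: "n - k = Suc (n - Suc k)" by auto
      have p: "(8/5::real)^n = (8/5)^(n - Suc k) * (8/5)^(Suc k)"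
        using n by (metis le_add_diff_inverse2 power_add)
      have "C*(8/5::real)^n = (1/2) * (8/5)^(n - Suc k)"
        unfolding C_def p by simp
      also have "\<dots> \<le> real (fib (n - k))" using fib_lower nn by metis
      finally show "C*(8/5::real)^n - (3/2)^n \<le> real_of_int (int (fib (n - k)) - seqE n)"
        using E_upper[of n] by simp
    qed
  qed
qed

end
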